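(* If $T:\mathrm{PSym}(3)\to\mathrm{Sym}(3)$ satisfies Axioms (A0.1), (A0.2), (A0.3) and (A3), then it also satisfies Axioms (A1) and (A2).
   Context: $\mathrm{Sym}(3)$: real symmetric $3\times3$ matrices; $\mathrm{PSym}(3)$: symmetric positive definite ones; $\mathbb 1$: identity; $\mathrm{O}(3)$: orthogonal group; coaxial means commuting. Axiom (A0.1): $T$ continuous. Axiom (A0.2): $T(U)=0$ iff $U=\mathbb 1$. Axiom (A0.3): $T(Q^TUQ)=Q^TT(U)Q$ for all $Q\in\mathrm O(3)$, $U\in\mathrm{PSym}(3)$. Axiom (A1): for every $\alpha>0$ there is $s\in\mathbb R$ such that for all $U\in\mathrm{PSym}(3)$: $U=\mathrm{diag}(\alpha,\alpha^{-1},1)$ iff $T(U)=\mathrm{diag}(s,-s,0)$. Axiom (A2): for every $\lambda>0$ there is $a\in\mathbb R$ such that for all $U\in\mathrm{PSym}(3)$: $U=\lambda\mathbb 1$ iff $T(U)=a\mathbb 1$. Axiom (A3): $T(U_1U_2)=T(U_1)+T(U_2)$ for all coaxial $U_1,U_2\in\mathrm{PSym}(3)$. *)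

theory Defs
  imports "HOL-Analysis.Analysis"
begin

definition Sym3 :: "(real^3^3) set" where
  "Sym3 = {A. transpose A = A}"

definition PSym3 :: "(real^3^3) set" where
  "PSym3 = {A. transpose A = A \<and> (\<forall>x::real^3. x \<noteq> 0 \<longrightarrow> x \<bullet> (A *v x) > 0)}"

text \<open>Diagonal matrix diag(a,b,c); the indices of type 3 are 1, 2, 3 (= 0 mod 3).\<close>
definition diag3 :: "real \<Rightarrow> real \<Rightarrow> real \<Rightarrow> real^3^3" where
  "diag3 a b c = (\<chi> i j. if i = j then (if i = 1 then a else if i = 2 then b else c) else 0)"

end

theory Submission
  imports Defs
begin


lemma quad_sym:
  fixes A :: "real^'n^'n"
  assumes "transpose A = A"
  shows "x \<bullet> (A *v y) = y \<bullet> (A *v x)"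
proof -
  have "x \<bullet> (A *v y) = (x v* A) \<bullet> y" by (simp add: dot_lmul_matrix)
  also have "x v* A = A *v x" by (metis assms vector_transpose_matrix)
  finally show ?thesis by (simp add: inner_commute)
qed

lemma eig_in_subspace:
  fixes A :: "real^'n^'n"
  assumes sym: "transpose A = A" and sub: "subspace S" and ne: "S \<noteq> {0}"
    and inv: "\<forall>x\<in>S. A *v x \<in> S"
  shows "\<exists>v\<in>S. norm v = 1 \<and> A *v v = (v \<bullet> (A *v v)) *\<^sub>R v"
proof -
  obtain x0 where x0: "x0 \<in> S" "x0 \<noteq> 0" using ne sub subspace_0 by blast
  define K where "K = S \<inter> sphere 0 1"
  have cK: "compact K" unfolding K_def
    by (simp add: closed_Int_compact closed_subspace sub)
  have "x0 /\<^sub>R norm x0 \<in> K" unfolding K_def using x0 sub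
    by (simp add: subspace_scale)
  then have neK: "K \<noteq> {}" by blast
  have cont: "continuous_on K (\<lambda>x. x \<bullet> (A *v x))"
    by (intro continuous_intros linear_continuous_on) auto
  obtain v where vK: "v \<in> K" and vmax: "\<And>y. y \<in> K \<Longrightarrow> y \<bullet> (A *v y) \<le> v \<bullet> (A *v v)"
    using continuous_attains_sup[OF cK neK cont] by blast
  define \<mu> where "\<mu> = v \<bullet> (A *v v)"
  have vS: "v \<in> S" and nv: "norm v = 1" using vK by (auto simp: K_def)
  have vv: "v \<bullet> v = 1" using nv by (simp add: norm_eq_1)
  have le: "x \<bullet> (A *v x) \<le> \<mu> * (x \<bullet> x)" if "x \<in> S" for x
  proof (cases "x = 0")
    case True then show ?thesis by simp
  next
    case False
    define u where "u = x /\<^sub>R norm x"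
    have "u \<in> K" unfolding K_def u_def using that False sub by (simp add: subspace_scale)
    then have "u \<bullet> (A *v u) \<le> \<mu>" using vmax \<mu>_def by blast
    moreover have "u \<bullet> (A *v u) = (x \<bullet> (A *v x)) / (norm x)^2"
      unfolding u_def by (simp add: matrix_vector_mult_scaleR power2_eq_square field_simps)
    moreover have "x \<bullet> x = (norm x)^2" by (simp add: power2_norm_eq_inner)
    ultimately show ?thesis using False
      by (simp add: divide_le_eq mult.commute)
  qed
  have orth: "w \<bullet> (A *v v - \<mu> *\<^sub>R v) = 0" if wS: "w \<in> S" for w
  proof -
    define c where "c = w \<bullet> (A *v v - \<mu> *\<^sub>R v)"
    define d where "d = w \<bullet> (A *v w) - \<mu> * (w \<bullet> w)"
    have key: "2 * t * c + t^2 * d \<le> 0" for t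
    proof -
      have "v + t *\<^sub>R w \<in> S" using vS wS sub by (simp add: subspace_add subspace_scale)
      from le[OF this] have "(v + t *\<^sub>R w) \<bullet> (A *v (v + t *\<^sub>R w)) \<le> \<mu> * ((v + t *\<^sub>R w) \<bullet> (v + t *\<^sub>R w))" .
      moreover have "v \<bullet> (A *v w) = w \<bullet> (A *v v)" using quad_sym[OF sym] .
      ultimately show ?thesis
        unfolding c_def d_def \<mu>_def
        by (simp add: matrix_vector_right_distrib matrix_vector_mult_scaleR inner_add_left inner_add_right
            inner_diff_right vv inner_commute[of v w] power2_eq_square algebra_simps \<mu>_def[symmetric])
    qed
    define t where "t = c / (\<bar>d\<bar> + 1)"
    have p: "\<bar>d\<bar> + 1 > 0" by simp
    have "2 * t * c + t^2 * d \<le> 0" by (rule key)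
    moreover have "2 * (c / e) * c + (c / e)^2 * d = (2 * c * c * e + c * c * d) / e^2" if "e > 0" for e :: real
      using that by (simp add: field_simps power2_eq_square)
    from this[OF p] have "2 * t * c + t^2 * d = (2 * c * c * (\<bar>d\<bar> + 1) + c * c * d) / (\<bar>d\<bar> + 1)^2"
      unfolding t_def .
    ultimately have "(2 * c * c * (\<bar>d\<bar> + 1) + c * c * d) / (\<bar>d\<bar> + 1)^2 \<le> 0" by simp
    then have "2 * c * c * (\<bar>d\<bar> + 1) + c * c * d \<le> 0"
      using p by (simp add: divide_le_0_iff)
    then have "c * c * (2 * \<bar>d\<bar> + 2 + d) \<le> 0" by (simp add: algebra_simps)
    moreover have "2 * \<bar>d\<bar> + 2 + d > 0" by linarith
    ultimately have "c * c \<le> 0" by (simp add: mult_le_0_iff)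
    then have "c = 0" using mult_le_0_iff[of c c] by auto
    then show ?thesis by (simp add: c_def)
  qed
  have "A *v v - \<mu> *\<^sub>R v \<in> S" using inv vS sub by (simp add: subspace_diff subspace_scale)
  from orth[OF this] have "A *v v - \<mu> *\<^sub>R v = 0" by simp
  then show ?thesis using vS nv \<mu>_def by auto
qed

lemma conj_entry3:
  fixes Q M :: "real^3^3"
  shows "(Q ** M ** transpose Q) $ i $ j = (Q$i) \<bullet> (M *v (Q$j))"
  by (simp add: matrix_matrix_mult_def matrix_vector_mult_def inner_vec_def transpose_def sum_3 algebra_simps)

lemma gram_entry3:
  fixes Q :: "real^3^3"
  shows "(Q ** transpose Q) $ i $ j = (Q$i) \<bullet> (Q$j)"
  by (simp add: matrix_matrix_mult_def inner_vec_def transpose_def sum_3 algebra_simps)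

lemma eig_sub3:
  fixes U :: "real^3^3"
  assumes sym: "transpose U = U" and sub: "subspace S" and ne: "S \<noteq> {0}"
    and inv: "\<forall>x\<in>S. U *v x \<in> S"
  obtains v \<mu> where "v \<in> S" "v \<bullet> v = 1" "U *v v = \<mu> *\<^sub>R v"
  using eig_in_subspace[OF assms] by (metis norm_eq_1)

lemma spectral3:
  fixes U :: "real^3^3"
  assumes sym: "transpose U = U"
  shows "\<exists>Q a b c. orthogonal_matrix Q \<and> Q ** U ** transpose Q = diag3 a b c
            \<and> U = transpose Q ** diag3 a b c ** Q"
proof -
  have "(UNIV::(real^3) set) \<noteq> {0}" by (metis UNIV_I zero_neq_one vec_eq_iff zero_index one_index singletonD)
  then obtain v1 \<mu>1 where v1: "v1 \<bullet> v1 = 1" "U *v v1 = \<mu>1 *\<^sub>R v1"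
    using eig_sub3[OF sym subspace_UNIV] by blast
  define S2 where "S2 = {x. v1 \<bullet> x = 0}"
  have sub2: "subspace S2" unfolding S2_def by (rule subspace_hyperplane)
  obtain y where "y \<noteq> 0" "orthogonal v1 y"
    using orthogonal_to_vector_exists[of v1] by auto
  then have ne2: "S2 \<noteq> {0}" unfolding S2_def orthogonal_def by blast
  have inv2: "\<forall>x\<in>S2. U *v x \<in> S2"
  proof
    fix x assume "x \<in> S2"
    then have "v1 \<bullet> x = 0" by (simp add: S2_def)
    moreover have "v1 \<bullet> (U *v x) = x \<bullet> (U *v v1)" using quad_sym[OF sym] .
    ultimately show "U *v x \<in> S2" unfolding S2_def using v1 by (simp add: inner_commute)
  qed
  obtain v2 \<mu>2 where v2: "v2 \<in> S2" "v2 \<bullet> v2 = 1" "U *v v2 = \<mu>2 *\<^sub>R v2"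
    using eig_sub3[OF sym sub2 ne2 inv2] by blast
  define S3 where "S3 = {x. v1 \<bullet> x = 0} \<inter> {x. v2 \<bullet> x = 0}"
  have sub3: "subspace S3" unfolding S3_def by (intro subspace_inter subspace_hyperplane)
  have "dim {v1, v2} \<le> card {v1, v2}" by (rule dim_le_card') simp
  also have "\<dots> \<le> 2" by (simp add: card_insert_le_m1)
  finally have "dim {v1, v2} < DIM(real^3)" by simp
  then obtain z where z: "z \<noteq> 0" "\<And>y. y \<in> span {v1, v2} \<Longrightarrow> orthogonal z y"
    using orthogonal_to_subspace_exists by blast
  have "orthogonal z v1" "orthogonal z v2" using z(2) by (auto intro: span_base)
  then have "z \<in> S3" unfolding S3_def orthogonal_def by (simp add: inner_commute)
  then have ne3: "S3 \<noteq> {0}" using z(1) by blast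
  have inv3: "\<forall>x\<in>S3. U *v x \<in> S3"
  proof
    fix x assume "x \<in> S3"
    then have "v1 \<bullet> x = 0" "v2 \<bullet> x = 0" by (auto simp: S3_def)
    moreover have "v1 \<bullet> (U *v x) = x \<bullet> (U *v v1)" using quad_sym[OF sym] .
    moreover have "v2 \<bullet> (U *v x) = x \<bullet> (U *v v2)" using quad_sym[OF sym] .
    ultimately show "U *v x \<in> S3" unfolding S3_def using v1 v2 by (simp add: inner_commute)
  qed
  obtain v3 \<mu>3 where v3: "v3 \<in> S3" "v3 \<bullet> v3 = 1" "U *v v3 = \<mu>3 *\<^sub>R v3"
    using eig_sub3[OF sym sub3 ne3 inv3] by blast
  have o12: "v1 \<bullet> v2 = 0" using v2 by (simp add: S2_def)
  have o13: "v1 \<bullet> v3 = 0" "v2 \<bullet> v3 = 0" using v3 by (auto simp: S3_def)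
  define Q :: "real^3^3" where "Q = vector [v1, v2, v3]"
  have Q1: "Q$1 = v1" and Q2: "Q$2 = v2" and Q3: "Q$3 = v3" by (simp_all add: Q_def)
  have QQt: "Q ** transpose Q = mat 1"
    unfolding vec_eq_iff forall_3 gram_entry3 Q1 Q2 Q3
    using v1 v2 v3 o12 o13 by (simp add: mat_def inner_commute)
  then have orth: "orthogonal_matrix Q"
    by (simp add: orthogonal_matrix_def matrix_left_right_inverse)
  have D: "Q ** U ** transpose Q = diag3 \<mu>1 \<mu>2 \<mu>3"
    unfolding vec_eq_iff forall_3 conj_entry3 Q1 Q2 Q3
    using v1 v2 v3 o12 o13 by (simp add: diag3_def inner_commute)
  have "transpose Q ** (Q ** U ** transpose Q) ** Q = (transpose Q ** Q) ** U ** (transpose Q ** Q)"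
    by (simp add: matrix_mul_assoc)
  also have "\<dots> = U" using orth by (simp add: orthogonal_matrix_def)
  finally show ?thesis using orth D by metis
qed

lemma ne3[simp]: "(1::3) \<noteq> 2" "(1::3) \<noteq> 3" "(2::3) \<noteq> 3" "(2::3) \<noteq> 1" "(3::3) \<noteq> 1" "(3::3) \<noteq> 2"
  by simp_all

lemma m3_eq: "(A::real^3^3) = B \<longleftrightarrow>
   A$1$1 = B$1$1 \<and> A$1$2 = B$1$2 \<and> A$1$3 = B$1$3 \<and>
   A$2$1 = B$2$1 \<and> A$2$2 = B$2$2 \<and> A$2$3 = B$2$3 \<and>
   A$3$1 = B$3$1 \<and> A$3$2 = B$3$2 \<and> A$3$3 = B$3$3"
  by (auto simp: vec_eq_iff forall_3)

lemma mm3: "((A::real^3^3) ** B) $ i $ j = A$i$1 * B$1$j + A$i$2 * B$2$j + A$i$3 * B$3$j"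
  by (simp add: matrix_matrix_mult_def sum_3)

lemma diag3_ent: "diag3 a b c $ 1 $ 1 = a" "diag3 a b c $ 2 $ 2 = b" "diag3 a b c $ 3 $ 3 = c"
  "diag3 a b c $ 1 $ 2 = 0" "diag3 a b c $ 1 $ 3 = 0" "diag3 a b c $ 2 $ 1 = 0"
  "diag3 a b c $ 2 $ 3 = 0" "diag3 a b c $ 3 $ 1 = 0" "diag3 a b c $ 3 $ 2 = 0"
  by (simp_all add: diag3_def)

lemma diag3_mult: "diag3 a b c ** diag3 a' b' c' = diag3 (a*a') (b*b') (c*c')"
  by (simp add: m3_eq mm3 diag3_ent)

lemma diag3_add: "diag3 a b c + diag3 a' b' c' = diag3 (a+a') (b+b') (c+c')"
  by (simp add: m3_eq diag3_ent)

lemma diag3_eq: "diag3 a b c = diag3 a' b' c' \<longleftrightarrow> a = a' \<and> b = b' \<and> c = c'"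
  by (simp add: m3_eq diag3_ent)

lemma diag3_zero: "(0::real^3^3) = diag3 0 0 0"
  by (simp add: m3_eq diag3_ent)

lemma diag3_one: "(mat 1::real^3^3) = diag3 1 1 1"
  by (simp add: m3_eq diag3_ent mat_def)

lemma diag3_scal: "(a *\<^sub>R mat 1::real^3^3) = diag3 a a a"
  by (simp add: m3_eq diag3_ent mat_def)

lemma diag3_transpose: "transpose (diag3 a b c) = diag3 a b c"
  by (simp add: m3_eq diag3_ent transpose_def)

lemma conj_diag3: "transpose (diag3 a b c) ** (M::real^3^3) ** diag3 a b c =
   (\<chi> i j. (diag3 a b c $ i $ i) * (diag3 a b c $ j $ j) * M$i$j)"
  by (simp add: m3_eq mm3 diag3_ent transpose_def)

lemma refl_orth: "a*a = 1 \<Longrightarrow> b*b = 1 \<Longrightarrow> c*c = 1 \<Longrightarrow> orthogonal_matrix (diag3 a b c)"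
  by (simp add: orthogonal_matrix diag3_transpose diag3_mult diag3_one)

definition P12 :: "real^3^3" where
  "P12 = (\<chi> i j. if (i = 1 \<and> j = 2) \<or> (i = 2 \<and> j = 1) \<or> (i = 3 \<and> j = 3) then 1 else 0)"
definition P23 :: "real^3^3" where
  "P23 = (\<chi> i j. if (i = 1 \<and> j = 1) \<or> (i = 2 \<and> j = 3) \<or> (i = 3 \<and> j = 2) then 1 else 0)"

lemma P12_orth: "orthogonal_matrix P12"
  by (simp add: orthogonal_matrix m3_eq mm3 P12_def transpose_def mat_def)
lemma P23_orth: "orthogonal_matrix P23"
  by (simp add: orthogonal_matrix m3_eq mm3 P23_def transpose_def mat_def)
lemma P12_conj: "transpose P12 ** diag3 a b c ** P12 = diag3 b a c"
  by (simp add: m3_eq mm3 P12_def transpose_def diag3_ent)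
lemma P23_conj: "transpose P23 ** diag3 a b c ** P23 = diag3 a c b"
  by (simp add: m3_eq mm3 P23_def transpose_def diag3_ent)

lemma scal_mm3a: "(A::real^3^3) ** (a *\<^sub>R (B::real^3^3)) = a *\<^sub>R (A ** B)"
  by (simp add: m3_eq mm3 algebra_simps)
lemma scal_mm3b: "(a *\<^sub>R (A::real^3^3)) ** (B::real^3^3) = a *\<^sub>R (A ** B)"
  by (simp add: m3_eq mm3 algebra_simps)

lemma diag3_PSym: assumes "a > 0" "b > 0" "c > 0" shows "diag3 a b c \<in> PSym3"
proof -
  have "x \<bullet> (diag3 a b c *v x) > 0" if "x \<noteq> 0" for x :: "real^3"
  proof -
    have e: "x \<bullet> (diag3 a b c *v x) = a * (x$1)^2 + b * (x$2)^2 + c * (x$3)^2"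
      by (simp add: inner_vec_def matrix_vector_mult_def sum_3 diag3_def power2_eq_square)
    have "x$1 \<noteq> 0 \<or> x$2 \<noteq> 0 \<or> x$3 \<noteq> 0" using that by (auto simp: vec_eq_iff forall_3)
    then have "a * (x$1)^2 > 0 \<or> b * (x$2)^2 > 0 \<or> c * (x$3)^2 > 0" using assms by auto
    moreover have "a * (x$1)^2 \<ge> 0" "b * (x$2)^2 \<ge> 0" "c * (x$3)^2 \<ge> 0" using assms by auto
    ultimately show ?thesis unfolding e by linarith
  qed
  then show ?thesis by (simp add: PSym3_def diag3_transpose)
qed

lemma PSym_diag_pos: assumes "U \<in> PSym3" shows "U$i$i > 0"
proof -
  have "axis i 1 \<bullet> (U *v axis i (1::real)) > 0" using assms by (simp add: PSym3_def axis_eq_0_iff)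
  moreover have "axis i 1 \<bullet> (U *v axis i (1::real)) = U$i$i"
    using exhaust_3[of i] by (auto simp: matrix_vector_mult_def axis_def inner_vec_def sum_3)
  ultimately show ?thesis by simp
qed

lemma PSym_conj: assumes Q: "orthogonal_matrix Q" and U: "U \<in> PSym3"
  shows "Q ** U ** transpose Q \<in> PSym3"
proof -
  have sU: "transpose U = U" using U by (simp add: PSym3_def)
  have QQt: "Q ** transpose Q = mat 1" using Q by (simp add: orthogonal_matrix_def)
  have "transpose (Q ** U ** transpose Q) = Q ** U ** transpose Q"
    by (simp add: matrix_transpose_mul sU matrix_mul_assoc)
  moreover have "x \<bullet> ((Q ** U ** transpose Q) *v x) > 0" if "x \<noteq> 0" for x
  proof -
    define y where "y = transpose Q *v x"
    have "Q *v y = x" unfolding y_def matrix_vector_mul_assoc QQt by simp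
    then have "y \<noteq> 0" using that by auto
    then have "y \<bullet> (U *v y) > 0" using U by (simp add: PSym3_def)
    moreover have "x \<bullet> ((Q ** U ** transpose Q) *v x) = y \<bullet> (U *v y)"
      unfolding y_def by (simp add: matrix_vector_mul_assoc[symmetric] dot_lmul_matrix[symmetric])
    ultimately show ?thesis by simp
  qed
  ultimately show ?thesis by (simp add: PSym3_def)
qed

lemma comm_diag_distinct:
  fixes U :: "real^3^3"
  assumes "U ** diag3 a b c = diag3 a b c ** U" "a \<noteq> b" "a \<noteq> c" "b \<noteq> c"
  shows "U = diag3 (U$1$1) (U$2$2) (U$3$3)"
proof -
  from assms(1) have e: "(U ** diag3 a b c)$i$j = (diag3 a b c ** U)$i$j" for i j by simp
  show ?thesis using e[of 1 2] e[of 1 3] e[of 2 1] e[of 2 3] e[of 3 1] e[of 3 2] assms(2-4)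
    by (auto simp: m3_eq mm3 diag3_ent)
qed

theorem mainTheorem8:
  fixes T :: "real^3^3 \<Rightarrow> real^3^3"
  assumes into_Sym: "\<forall>U\<in>PSym3. T U \<in> Sym3"
    and A01: "continuous_on PSym3 T"
    and A02: "\<forall>U\<in>PSym3. T U = 0 \<longleftrightarrow> U = mat 1"
    and A03: "\<forall>Q U. orthogonal_matrix Q \<and> U \<in> PSym3 \<longrightarrow>
                 T (transpose Q ** U ** Q) = transpose Q ** T U ** Q"
    and A3: "\<forall>U1\<in>PSym3. \<forall>U2\<in>PSym3. U1 ** U2 = U2 ** U1 \<longrightarrow>
                 T (U1 ** U2) = T U1 + T U2"
  shows "(\<forall>\<alpha>::real. \<alpha> > 0 \<longrightarrow> (\<exists>s::real. \<forall>U\<in>PSym3.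
            U = diag3 \<alpha> (inverse \<alpha>) 1 \<longleftrightarrow> T U = diag3 s (- s) 0))
       \<and> (\<forall>lam::real. lam > 0 \<longrightarrow> (\<exists>a::real. \<forall>U\<in>PSym3.
            U = lam *\<^sub>R mat 1 \<longleftrightarrow> T U = a *\<^sub>R mat 1))"
proof -
  have I: "mat 1 \<in> PSym3" using diag3_PSym[of 1 1 1] by (simp add: diag3_one)
  have T1: "T (mat 1) = 0" using A02 I by blast
  have Tinj: "x = x' \<and> y = y' \<and> z = z'"
    if pos: "x > 0" "y > 0" "z > 0" "x' > 0" "y' > 0" "z' > 0"
      and eq: "T (diag3 x y z) = T (diag3 x' y' z')" for x y z x' y' z' :: real
  proof -
    define W where "W = diag3 (x/x') (y/y') (z/z')"
    have WP: "W \<in> PSym3" unfolding W_def using pos by (intro diag3_PSym) auto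
    have DP: "diag3 x' y' z' \<in> PSym3" using pos by (intro diag3_PSym) auto
    have m: "W ** diag3 x' y' z' = diag3 x y z" unfolding W_def diag3_mult using pos by simp
    have c: "W ** diag3 x' y' z' = diag3 x' y' z' ** W" unfolding W_def diag3_mult by (simp add: mult.commute)
    have "T (diag3 x y z) = T W + T (diag3 x' y' z')" using A3 WP DP c m by metis
    then have "T W = 0" using eq by simp
    then have "W = mat 1" using A02 WP by blast
    then show ?thesis unfolding W_def diag3_one diag3_eq using pos by simp
  qed
  have Tdiag: "\<exists>p q r. T (diag3 x y z) = diag3 p q r" if pos: "x > 0" "y > 0" "z > 0" for x y z :: real
  proof -
    define D where "D = diag3 x y z"
    define M where "M = T D"
    have DP: "D \<in> PSym3" unfolding D_def using pos by (intro diag3_PSym) auto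
    have refl: "M = (\<chi> i j. (diag3 a b c $ i $ i) * (diag3 a b c $ j $ j) * M$i$j)"
      if "a*a = 1" "b*b = 1" "c*c = 1" for a b c :: real
    proof -
      have o: "orthogonal_matrix (diag3 a b c)" using refl_orth that .
      have "transpose (diag3 a b c) ** D ** diag3 a b c = D"
      proof -
        have ee: "a*x*a = x" "b*y*b = y" "c*z*c = z" using that by (metis mult.commute mult.assoc mult_1_right)+
        show ?thesis unfolding D_def diag3_transpose diag3_mult by (simp only: ee)
      qed
      then have "M = transpose (diag3 a b c) ** M ** diag3 a b c"
        using A03 o DP unfolding M_def by metis
      then show ?thesis using conj_diag3 by metis
    qed
    have r1: "M = (\<chi> i j. (diag3 (-1) 1 1 $ i $ i) * (diag3 (-1) 1 1 $ j $ j) * M$i$j)"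
      by (rule refl) auto
    have r2: "M = (\<chi> i j. (diag3 1 (-1) 1 $ i $ i) * (diag3 1 (-1) 1 $ j $ j) * M$i$j)"
      by (rule refl) auto
    have e1: "M$i$j = (diag3 (-1) 1 1 $ i $ i) * (diag3 (-1) 1 1 $ j $ j) * M$i$j" for i j
      by (subst r1) simp
    have e2: "M$i$j = (diag3 1 (-1) 1 $ i $ i) * (diag3 1 (-1) 1 $ j $ j) * M$i$j" for i j
      by (subst r2) simp
    have "M = diag3 (M$1$1) (M$2$2) (M$3$3)"
      using e1[of 1 2] e1[of 1 3] e1[of 2 1] e1[of 3 1] e2[of 2 3] e2[of 3 2]
      by (simp add: m3_eq diag3_ent)
    then show ?thesis unfolding M_def D_def by blast
  qed
  have P12T: "T (diag3 y x z) = transpose P12 ** T (diag3 x y z) ** P12"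
    if pos: "x > 0" "y > 0" "z > 0" for x y z :: real
    using A03 P12_orth diag3_PSym[OF pos] P12_conj by metis
  have P23T: "T (diag3 x z y) = transpose P23 ** T (diag3 x y z) ** P23"
    if pos: "x > 0" "y > 0" "z > 0" for x y z :: real
    using A03 P23_orth diag3_PSym[OF pos] P23_conj by metis
  have comm: "U ** T U = T U ** U" if UP: "U \<in> PSym3" for U
  proof -
    have sU: "transpose U = U" using UP by (simp add: PSym3_def)
    obtain Q a b c where Q: "orthogonal_matrix Q" and E: "Q ** U ** transpose Q = diag3 a b c"
      and Ue: "U = transpose Q ** diag3 a b c ** Q"
      using spectral3[OF sU] by blast
    have EP: "diag3 a b c \<in> PSym3" using PSym_conj[OF Q UP] E by simp
    have pos: "a > 0" "b > 0" "c > 0" using PSym_diag_pos[OF EP, of 1] PSym_diag_pos[OF EP, of 2]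
      PSym_diag_pos[OF EP, of 3] by (simp_all add: diag3_ent)
    obtain p q r where Tp: "T (diag3 a b c) = diag3 p q r" using Tdiag[OF pos] by blast
    have TU: "T U = transpose Q ** diag3 p q r ** Q" using A03 Q EP Ue Tp by metis
    have QQ: "Q ** transpose Q = mat 1" using Q by (simp add: orthogonal_matrix_def)
    have "U ** T U = (transpose Q ** diag3 a b c ** Q) ** (transpose Q ** diag3 p q r ** Q)"
      using TU Ue by metis
    also have "\<dots> = transpose Q ** (diag3 a b c ** (Q ** transpose Q) ** diag3 p q r) ** Q"
      by (simp add: matrix_mul_assoc)
    also have "\<dots> = transpose Q ** (diag3 p q r ** (Q ** transpose Q) ** diag3 a b c) ** Q"
      unfolding QQ by (simp add: diag3_mult mult.commute)
    also have "\<dots> = (transpose Q ** diag3 p q r ** Q) ** (transpose Q ** diag3 a b c ** Q)"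
      by (simp add: matrix_mul_assoc)
    also have "\<dots> = T U ** U"
      using TU Ue by metis
    finally show ?thesis .
  qed
  show ?thesis
  proof (intro conjI allI impI)
    fix \<alpha> :: real assume a: "\<alpha> > 0"
    define D where "D = diag3 \<alpha> (inverse \<alpha>) 1"
    have pos: "inverse \<alpha> > 0" using a by simp
    have DP: "D \<in> PSym3" unfolding D_def using a by (intro diag3_PSym) auto
    obtain p q r where Tp: "T D = diag3 p q r" using Tdiag[OF a pos] unfolding D_def by force
    define D' where "D' = diag3 (inverse \<alpha>) \<alpha> 1"
    have D'P: "D' \<in> PSym3" unfolding D'_def using a by (intro diag3_PSym) auto
    have TD': "T D' = diag3 q p r" using P12T[OF a pos, of 1] Tp P12_conj unfolding D_def D'_def by simp
    have m: "D ** D' = mat 1" "D' ** D = mat 1" unfolding D_def D'_def diag3_mult diag3_one using a by simp_all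
    have "T (mat 1) = T D + T D'" using A3 DP D'P m by metis
    then have "diag3 0 0 0 = diag3 (p + q) (q + p) (r + r)" using T1 Tp TD' by (simp add: diag3_add diag3_zero)
    then have qp: "q = - p" "r = 0" unfolding diag3_eq by auto
    show "\<exists>s. \<forall>U\<in>PSym3. U = diag3 \<alpha> (inverse \<alpha>) 1 \<longleftrightarrow> T U = diag3 s (- s) 0"
    proof (intro exI ballI iffI)
      fix U assume "U = diag3 \<alpha> (inverse \<alpha>) 1"
      then show "T U = diag3 p (- p) 0" using Tp qp D_def by simp
    next
      fix U assume UP: "U \<in> PSym3" and TU: "T U = diag3 p (- p) 0"
      show "U = diag3 \<alpha> (inverse \<alpha>) 1"
      proof (cases "p = 0")
        case True
        then have "T U = 0" "T D = 0" using TU Tp qp by (simp_all add: diag3_zero)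
        then have "U = mat 1" "D = mat 1" using A02 UP DP by blast+
        then show ?thesis unfolding D_def by simp
      next
        case False
        have cU: "U ** diag3 p (- p) 0 = diag3 p (- p) 0 ** U" using comm[OF UP] TU by simp
        have Ud: "U = diag3 (U$1$1) (U$2$2) (U$3$3)"
          using comm_diag_distinct[OF cU] False by simp
        have "T (diag3 (U$1$1) (U$2$2) (U$3$3)) = T (diag3 \<alpha> (inverse \<alpha>) 1)"
          using Ud TU Tp qp D_def by simp
        then have "U$1$1 = \<alpha> \<and> U$2$2 = inverse \<alpha> \<and> U$3$3 = 1"
          using a pos PSym_diag_pos[OF UP] by (intro Tinj) auto
        then show ?thesis using Ud by simp
      qed
    qed
  next
    fix lam :: real assume l: "lam > 0"
    define L where "L = diag3 lam lam lam"
    have LP: "L \<in> PSym3" unfolding L_def using l by (intro diag3_PSym) auto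
    obtain p q r where Tp: "T L = diag3 p q r" using Tdiag[OF l l l] unfolding L_def by force
    have "T L = diag3 q p r" using P12T[OF l l l] Tp P12_conj unfolding L_def by simp
    moreover have "T L = diag3 p r q" using P23T[OF l l l] Tp P23_conj unfolding L_def by simp
    ultimately have "diag3 p q r = diag3 q p r" "diag3 p q r = diag3 p r q" using Tp by auto
    then have pq: "q = p" "r = p" unfolding diag3_eq by blast+
    have TL: "T L = p *\<^sub>R mat 1" using Tp pq by (simp add: diag3_scal)
    show "\<exists>a. \<forall>U\<in>PSym3. U = lam *\<^sub>R mat 1 \<longleftrightarrow> T U = a *\<^sub>R mat 1"
    proof (intro exI ballI iffI)
      fix U :: "real^3^3" assume "U = lam *\<^sub>R mat 1"
      then show "T U = p *\<^sub>R mat 1" using TL L_def by (simp add: diag3_scal)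
    next
      fix U assume UP: "U \<in> PSym3" and TU: "T U = p *\<^sub>R mat 1"
      have sU: "transpose U = U" using UP by (simp add: PSym3_def)
      obtain Q a b c where Q: "orthogonal_matrix Q" and E: "Q ** U ** transpose Q = diag3 a b c"
        and Ue: "U = transpose Q ** diag3 a b c ** Q"
        using spectral3[OF sU] by blast
      have EP: "diag3 a b c \<in> PSym3" using PSym_conj[OF Q UP] E by simp
      have pos: "a > 0" "b > 0" "c > 0" using PSym_diag_pos[OF EP, of 1] PSym_diag_pos[OF EP, of 2]
        PSym_diag_pos[OF EP, of 3] by (simp_all add: diag3_ent)
      have QQ: "Q ** transpose Q = mat 1" using Q by (simp add: orthogonal_matrix_def)
      have TU': "T U = transpose Q ** T (diag3 a b c) ** Q" using A03 Q EP Ue by metis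
      have "T (diag3 a b c) = (Q ** transpose Q) ** T (diag3 a b c) ** (Q ** transpose Q)"
        unfolding QQ by simp
      also have "\<dots> = Q ** T U ** transpose Q" unfolding TU' by (simp add: matrix_mul_assoc)
      also have "\<dots> = p *\<^sub>R mat 1" unfolding TU by (simp add: scal_mm3a scal_mm3b QQ)
      finally have "T (diag3 a b c) = T (diag3 lam lam lam)" using TL L_def by simp
      then have "a = lam \<and> b = lam \<and> c = lam" using pos l by (intro Tinj) auto
      then have "U = transpose Q ** (lam *\<^sub>R mat 1) ** Q" using Ue by (simp add: diag3_scal)
      also have "\<dots> = lam *\<^sub>R (transpose Q ** Q)" by (simp add: scal_mm3a scal_mm3b)
      also have "\<dots> = lam *\<^sub>R mat 1" using Q by (simp add: orthogonal_matrix_def)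
      finally show "U = lam *\<^sub>R mat 1" .
    qed
  qed
qed

end
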